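(* Let $G$ be a finite simple graph with adjacency matrix $A$ and let $W$ be a vertex subset that induces a regular subgraph, such that every vertex outside $W$ is adjacent to exactly $|W|$, $\tfrac12|W|$ or $0$ vertices of $W$. Let $G_W$ be the graph obtained by Godsil–McKay switching with respect to $W$, with adjacency matrix $A_W$. Then $\mathrm{2\text{-}rank}(G_W)\in\{\mathrm{2\text{-}rank}(G)-2,\ \mathrm{2\text{-}rank}(G),\ \mathrm{2\text{-}rank}(G)+2\}$. Moreover, if $\mathrm{2\text{-}rank}(G_W)=\mathrm{2\text{-}rank}(G)+2$, then $\mathrm{Col}_2(A)\subset\mathrm{Col}_2(A_W)$; in particular $\mathbf{1}\in\mathrm{Col}_2(A)$ then implies $\mathbf{1}\in\mathrm{Col}_2(A_W)$.
   Context: The 2-rank of a graph is the rank over $\mathbb{F}_2$ of its adjacency matrix; $\mathrm{Col}_2(M)$ is the column space of $M$ over $\mathbb{F}_2$, and $\mathbf{1}$ is the all-ones vector. Godsil–McKay switching with respect to $W$ (under the stated hypotheses on $W$): for each vertex $v\notin W$ having exactly $\tfrac12|W|$ neighbours in $W$, delete the $\tfrac12|W|$ edges between $v$ and $W$ and join $v$ instead to the other $\tfrac12|W|$ vertices of $W$; all other adjacencies are unchanged. *)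

theory Defs
  imports "HOL-Library.Z2" "Jordan_Normal_Form.DL_Rank"
begin

definition simple_graph :: "nat \<Rightarrow> (nat \<Rightarrow> nat \<Rightarrow> bool) \<Rightarrow> bool" where
  "simple_graph n E \<longleftrightarrow> (\<forall>u v. E u v \<longrightarrow> u < n \<and> v < n) \<and>
     (\<forall>u v. E u v \<longleftrightarrow> E v u) \<and> (\<forall>v. \<not> E v v)"

definition adj_mat :: "nat \<Rightarrow> (nat \<Rightarrow> nat \<Rightarrow> bool) \<Rightarrow> bit mat" where
  "adj_mat n E = mat n n (\<lambda>(i, j). if E i j then 1 else 0)"

definition nbrs_in :: "(nat \<Rightarrow> nat \<Rightarrow> bool) \<Rightarrow> nat set \<Rightarrow> nat \<Rightarrow> nat" where
  "nbrs_in E W v = card {w \<in> W. E v w}"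

definition gm_switch :: "nat set \<Rightarrow> (nat \<Rightarrow> nat \<Rightarrow> bool) \<Rightarrow> nat \<Rightarrow> nat \<Rightarrow> bool" where
  "gm_switch W E u v =
     (if (u \<in> W \<and> v \<notin> W \<and> 2 * nbrs_in E W v = card W) \<or>
         (v \<in> W \<and> u \<notin> W \<and> 2 * nbrs_in E W u = card W)
      then \<not> E u v else E u v)"

abbreviation rank2 :: "nat \<Rightarrow> bit mat \<Rightarrow> nat" where
  "rank2 n A \<equiv> vec_space.rank n A"

abbreviation col2 :: "nat \<Rightarrow> bit mat \<Rightarrow> bit vec set" where
  "col2 n A \<equiv> vec_space.col_space n A"

end

theory Submission
  imports Defs "HOL-Library.FuncSet" "HOL-Library.Function_Algebras"
begin

lemma bit_cases2: "(b::bit) = 0 \<or> b = 1" by (cases b) auto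

lemma alt_form_card:
  fixes C :: "'v::ab_group_add set" and \<beta> :: "'v \<Rightarrow> 'v \<Rightarrow> bit"
  assumes "finite C"
    and two: "\<And>v::'v. v + v = 0"
    and "0 \<in> C" and "\<And>p q. p \<in> C \<Longrightarrow> q \<in> C \<Longrightarrow> p + q \<in> C"
    and "\<And>p p' q. p \<in> C \<Longrightarrow> p' \<in> C \<Longrightarrow> q \<in> C \<Longrightarrow> \<beta> (p + p') q = \<beta> p q + \<beta> p' q"
    and "\<And>p q. p \<in> C \<Longrightarrow> q \<in> C \<Longrightarrow> \<beta> p q = \<beta> q p"
    and "\<And>p. p \<in> C \<Longrightarrow> \<beta> p p = 0"
    and "\<And>p. p \<in> C \<Longrightarrow> (\<forall>q\<in>C. \<beta> p q = 0) \<Longrightarrow> p = 0"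
  shows "\<exists>k. card C = 4 ^ k"
  using assms(1,3-)
proof (induction "card C" arbitrary: C rule: less_induct)
  case less
  note fin = less.prems(1) and z = less.prems(2) and cl = less.prems(3)
    and lin = less.prems(4) and sym = less.prems(5) and alt = less.prems(6) and nd = less.prems(7)
  have lin2: "\<beta> p (q + q') = \<beta> p q + \<beta> p q'" if "p \<in> C" "q \<in> C" "q' \<in> C" for p q q'
    using that sym lin cl by metis
  show ?case
  proof (cases "C = {0}")
    case True then show ?thesis by (intro exI[of _ 0]) simp
  next
    case False
    then obtain c where c: "c \<in> C" "c \<noteq> 0" using z by auto
    then obtain d where d: "d \<in> C" "\<beta> c d \<noteq> 0" using nd by blast
    have cd: "\<beta> c d = 1" using d(2) bit_cases2 by blast
    have dc: "\<beta> d c = 1" using cd sym c d by metis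
    define C' where "C' = {e \<in> C. \<beta> c e = 0 \<and> \<beta> d e = 0}"
    have C'C: "C' \<subseteq> C" unfolding C'_def by auto
    have "c \<notin> C'" unfolding C'_def using dc by auto
    then have lt: "card C' < card C" using C'C c fin by (metis psubset_card_mono psubsetI)
    have b0: "\<beta> p 0 = 0" if "p \<in> C" for p
      using lin2[OF that z z] by simp
    have IH: "\<exists>k. card C' = 4 ^ k"
    proof (rule less.hyps[OF lt])
      show "finite C'" using C'C fin finite_subset by blast
      show "0 \<in> C'" unfolding C'_def using z b0 c d by auto
      show "p + q \<in> C'" if "p \<in> C'" "q \<in> C'" for p q
        using that cl lin2 c d unfolding C'_def by auto
      show "\<beta> (p + p') q = \<beta> p q + \<beta> p' q" if "p \<in> C'" "p' \<in> C'" "q \<in> C'" for p p' q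
        using that C'C lin by blast
      show "\<beta> p q = \<beta> q p" if "p \<in> C'" "q \<in> C'" for p q using that C'C sym by blast
      show "\<beta> p p = 0" if "p \<in> C'" for p using that C'C alt by blast
      show "p = 0" if p: "p \<in> C'" and pq: "\<forall>q\<in>C'. \<beta> p q = 0" for p
      proof -
        have "\<beta> p g = 0" if g: "g \<in> C" for g
        proof -
          define g' where "g' = g + (if \<beta> d g = 1 then c else 0) + (if \<beta> c g = 1 then d else 0)"
          have g'C: "g' \<in> C" unfolding g'_def using g c d z cl by auto
          have "\<beta> c g' = 0" unfolding g'_def using g c d z cl lin2 alt cd b0
            by (cases "\<beta> c g" rule: bit.exhaust; cases "\<beta> d g" rule: bit.exhaust) (auto simp: lin2)
          have "\<beta> d g' = 0" unfolding g'_def using g c d z cl lin2 alt cd b0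
            by (cases "\<beta> c g" rule: bit.exhaust; cases "\<beta> d g" rule: bit.exhaust) (auto simp: lin2 dc)
          then have "g' \<in> C'" using \<open>\<beta> c g' = 0\<close> g'C unfolding C'_def by auto
          then have "\<beta> p g' = 0" using pq by auto
          moreover have "\<beta> p c = 0" "\<beta> p d = 0" using p sym c d C'C unfolding C'_def by auto
          moreover have "p \<in> C" using p C'C by auto
          ultimately show ?thesis unfolding g'_def using g c d z cl b0
            by (auto simp: lin2 split: if_splits)
        qed
        then show ?thesis using nd p C'C by auto
      qed
    qed
    define f where "f = (\<lambda>(e, a::bool, b::bool). e + (if a then c else 0) + (if b then d else 0))"
    have "f ` (C' \<times> UNIV \<times> UNIV) = C"
    proof (intro equalityI subsetI)
      fix x assume "x \<in> f ` (C' \<times> UNIV \<times> UNIV)"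
      then show "x \<in> C" unfolding f_def using C'C c d z cl by auto
    next
      fix g assume g: "g \<in> C"
      define g' where "g' = g + (if \<beta> d g = 1 then c else 0) + (if \<beta> c g = 1 then d else 0)"
      have g'C: "g' \<in> C" unfolding g'_def using g c d z cl by auto
      have "\<beta> c g' = 0" unfolding g'_def using g c d z cl lin2 alt cd b0
        by (cases "\<beta> c g" rule: bit.exhaust; cases "\<beta> d g" rule: bit.exhaust) (auto simp: lin2)
      moreover have "\<beta> d g' = 0" unfolding g'_def using g c d z cl lin2 alt cd b0
        by (cases "\<beta> c g" rule: bit.exhaust; cases "\<beta> d g" rule: bit.exhaust) (auto simp: lin2 dc)
      ultimately have "g' \<in> C'" using g'C unfolding C'_def by auto
      moreover have "g = f (g', \<beta> d g = 1, \<beta> c g = 1)" unfolding f_def g'_def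
        by (simp add: add.assoc two) (metis add.assoc add.commute add.left_neutral two)
      ultimately show "g \<in> f ` (C' \<times> UNIV \<times> UNIV)" by blast
    qed
    moreover have "inj_on f (C' \<times> UNIV \<times> UNIV)"
    proof (rule inj_onI)
      fix X Y assume X: "X \<in> C' \<times> UNIV \<times> UNIV" and Y: "Y \<in> C' \<times> UNIV \<times> UNIV" and XY: "f X = f Y"
      obtain e a b where Xd: "X = (e, a, b)" by (cases X) auto
      obtain e' a' b' where Yd: "Y = (e', a', b')" by (cases Y) auto
      have e: "e \<in> C'" and e': "e' \<in> C'" using X Y Xd Yd by auto
      have eq: "f (e, a, b) = f (e', a', b')" using XY Xd Yd by simp
      have eC: "e \<in> C" "e' \<in> C" using e e' C'C by auto
      have kc: "\<beta> c (f (e, a, b)) = (if b then 1 else 0)" if "e \<in> C'" for e a b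
        using that c d z cl C'C alt cd b0 unfolding f_def C'_def by (auto simp: lin2)
      have kd: "\<beta> d (f (e, a, b)) = (if a then 1 else 0)" if "e \<in> C'" for e a b
        using that c d z cl C'C alt dc b0 unfolding f_def C'_def by (auto simp: lin2)
      have "b = b'" using kc[OF e, of a b] kc[OF e', of a' b'] eq by (auto split: if_splits)
      moreover have "a = a'" using kd[OF e, of a b] kd[OF e', of a' b'] eq by (auto split: if_splits)
      ultimately show "X = Y" using eq unfolding f_def Xd Yd by auto
    qed
    ultimately have "card C = card (C' \<times> (UNIV::bool set) \<times> (UNIV::bool set))"
      by (metis card_image)
    also have "\<dots> = card C' * 4" by (simp add: card_cartesian_product del: UNIV_Times_UNIV)
    finally show ?thesis using IH by (metis power_Suc mult.commute)
  qed
qed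

lemma (in vec_space) card_span_indpt:
  assumes fin: "finite U" and U: "U \<subseteq> carrier_vec n" and li: "lin_indpt U"
  shows "card (span U) = card (UNIV::'a set) ^ card U"
proof -
  have sp: "span U = (\<lambda>a. lincomb a U) ` (U \<rightarrow>\<^sub>E UNIV)"
  proof -
    have "span U = {lincomb a U | a. a \<in> U \<rightarrow> UNIV}" using finite_span[OF fin] U by simp
    also have "\<dots> = (\<lambda>a. lincomb a U) ` (U \<rightarrow>\<^sub>E UNIV)"
    proof (intro equalityI subsetI)
      fix v assume "v \<in> {lincomb a U | a. a \<in> U \<rightarrow> UNIV}"
      then obtain a where v: "v = lincomb a U" by auto
      have "lincomb a U = lincomb (restrict a U) U"
        by (rule lincomb_cong) (use U in auto)
      then show "v \<in> (\<lambda>a. lincomb a U) ` (U \<rightarrow>\<^sub>E UNIV)" using v by force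
    qed auto
    finally show ?thesis .
  qed
  have inj: "inj_on (\<lambda>a. lincomb a U) (U \<rightarrow>\<^sub>E UNIV)"
  proof (rule inj_onI)
    fix a b assume a: "a \<in> U \<rightarrow>\<^sub>E UNIV" and b: "b \<in> U \<rightarrow>\<^sub>E UNIV" and eq: "lincomb a U = lincomb b U"
    have "lincomb (\<lambda>v. a v - b v) U = lincomb a U \<ominus>\<^bsub>V\<^esub> lincomb b U"
      using lincomb_diff[OF fin U, of a b] by simp
    also have "\<dots> = 0\<^sub>v n" unfolding eq using U
      by (metis M.r_neg M.minus_eq lincomb_closed Pi_UNIV UNIV_I cV)
    finally have z: "lincomb (\<lambda>v. a v - b v) U = 0\<^sub>v n" .
    have "\<forall>v\<in>U. a v = b v"
    proof (rule ccontr)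
      assume "\<not> (\<forall>v\<in>U. a v = b v)"
      then obtain v where "v \<in> U" "a v - b v \<noteq> 0" by auto
      then have "lin_dep U" using lin_dep_crit[OF fin subset_refl, where a="\<lambda>v. a v - b v" and v=v] z by simp
      then show False using li by simp
    qed
    then show "a = b" using a b by (metis PiE_ext)
  qed
  have "card (span U) = card (U \<rightarrow>\<^sub>E (UNIV::'a set))" using sp inj card_image by metis
  also have "\<dots> = card (UNIV::'a set) ^ card U" by (simp add: card_PiE fin)
  finally show ?thesis .
qed

lemma (in vec_space) card_col_space:
  assumes A: "A \<in> carrier_mat n nc"
  shows "card (span (set (cols A))) = card (UNIV::'a set) ^ rank A"
proof -
  let ?P = "\<lambda>T. T \<subseteq> set (cols A) \<and> lin_indpt T"
  have S: "set (cols A) \<subseteq> carrier_vec n" using A cols_dim by blast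
  have "lin_indpt {}" by (rule finite_lin_indpt2) auto
  then obtain U where fU: "finite U" and mU: "maximal U ?P"
    using maximal_exists_superset[of "set (cols A)" ?P "{}"] by auto
  have r: "rank A = card U" using rank_card_indpt[OF A mU] .
  have US: "U \<subseteq> set (cols A)" and li: "lin_indpt U" using mU unfolding maximal_def by auto
  have Uc: "U \<subseteq> carrier_vec n" using US S by auto
  have "set (cols A) \<subseteq> span U"
  proof
    fix s assume s: "s \<in> set (cols A)"
    show "s \<in> span U"
    proof (cases "s \<in> U")
      case True then show ?thesis using span_mem[OF Uc] by auto
    next
      case False
      have "\<not> lin_indpt (U \<union> {s})"
      proof
        assume "lin_indpt (U \<union> {s})"
        then have "U = U \<union> {s}" using mU s US unfolding maximal_def by blast
        then show False using False by auto
      qed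
      then show ?thesis using lin_dep_iff_in_span[OF Uc li _ False] s S by auto
    qed
  qed
  then have "span (set (cols A)) \<subseteq> span U"
    using span_is_subset[OF _ span_is_submodule[OF Uc]] by auto
  moreover have "span U \<subseteq> span (set (cols A))" using span_is_monotone[OF US] .
  ultimately have "span (set (cols A)) = span U" by auto
  then show ?thesis using card_span_indpt[OF fU Uc li] r by simp
qed

lemma UNIV_bit: "(UNIV::bit set) = {0,1}" using bit_not_zero_iff by auto
lemma finite_UNIV_bit: "finite (UNIV::bit set)" by (simp only: UNIV_bit finite.emptyI finite_insert)
lemma card_UNIV_bit: "card (UNIV::bit set) = 2" by (simp add: UNIV_bit)

lemma bit_add_self: "(b::bit) + b = 0" by (cases b) auto

lemma fun_add_self: "(f::nat \<Rightarrow> bit) + f = 0" by (rule ext) (simp only: plus_fun_def bit_add_self zero_fun_def)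

lemma pair_sum:
  fixes f :: "nat \<Rightarrow> nat \<Rightarrow> bit"
  assumes "\<And>i j. f i j = f j i" "\<And>i. f i i = 0"
  shows "(\<Sum>i<n. \<Sum>j<n. f i j) = 0"
proof (induction n)
  case 0 then show ?case by simp
next
  case (Suc n)
  have "(\<Sum>i<Suc n. \<Sum>j<Suc n. f i j) = (\<Sum>i<n. \<Sum>j<n. f i j) + (\<Sum>i<n. f i n) + ((\<Sum>j<n. f n j) + f n n)"
    by (simp only: sum.lessThan_Suc sum.distrib) (simp only: add_ac)
  moreover have "(\<Sum>j<n. f n j) = (\<Sum>i<n. f i n)" using assms(1) by (intro sum.cong) auto
  ultimately show ?case using Suc assms(2) by (simp only: bit_add_self add_0_left add_0_right add.assoc[symmetric] add.commute[of "\<Sum>i<n. f i n"] add.left_commute[of "\<Sum>i<n. f i n"])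
qed

definition mv :: "nat \<Rightarrow> bit mat \<Rightarrow> (nat \<Rightarrow> bit) \<Rightarrow> nat \<Rightarrow> bit" where
  "mv n M g = (\<lambda>i. if i < n then \<Sum>j<n. M $$ (i,j) * g j else 0)"

definition dotn :: "nat \<Rightarrow> (nat \<Rightarrow> bit) \<Rightarrow> (nat \<Rightarrow> bit) \<Rightarrow> bit" where
  "dotn n p g = (\<Sum>i<n. p i * g i)"

definition CS :: "nat \<Rightarrow> bit mat \<Rightarrow> (nat \<Rightarrow> bit) set" where
  "CS n M = range (mv n M)"

lemma mv_add: "mv n M (g + h) = mv n M g + mv n M h"
  apply (rule ext)
  apply (simp only: mv_def plus_fun_def)
  subgoal for x by (cases "x < n") (simp only: if_True if_False distrib_left sum.distrib add_0_left)+
  done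

lemma mv_zero: "mv n M 0 = 0"
  by (rule ext) (simp only: mv_def zero_fun_def mult_zero_right sum.neutral_const if_cancel)

lemma dotn_add: "dotn n (p + q) g = dotn n p g + dotn n q g"
  by (simp only: dotn_def plus_fun_def distrib_right sum.distrib)

lemma dotn_comm: "dotn n p g = dotn n g p"
  by (simp only: dotn_def mult.commute)

lemma dotn_mv:
  assumes sym: "\<And>i j. i < n \<Longrightarrow> j < n \<Longrightarrow> M $$ (i,j) = M $$ (j,i)"
  shows "dotn n (mv n M h) g = dotn n h (mv n M g)"
proof -
  have "dotn n (mv n M h) g = (\<Sum>i<n. \<Sum>j<n. M $$ (i,j) * h j * g i)"
    by (auto simp only: dotn_def mv_def sum_distrib_right lessThan_iff if_True intro!: sum.cong)
  also have "\<dots> = (\<Sum>j<n. \<Sum>i<n. M $$ (i,j) * h j * g i)" by (rule sum.swap)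
  also have "\<dots> = (\<Sum>j<n. \<Sum>i<n. h j * (M $$ (j,i) * g i))"
    using sym by (intro sum.cong refl) (simp only: mult.assoc mult.commute mult.left_commute lessThan_iff)
  also have "\<dots> = dotn n h (mv n M g)"
    by (auto simp only: dotn_def mv_def sum_distrib_left lessThan_iff if_True intro!: sum.cong)
  finally show ?thesis .
qed

lemma dotn_mv_self:
  assumes sym: "\<And>i j. i < n \<Longrightarrow> j < n \<Longrightarrow> M $$ (i,j) = M $$ (j,i)"
    and dg: "\<And>i. i < n \<Longrightarrow> M $$ (i,i) = 0"
  shows "dotn n (mv n M h) h = 0"
proof -
  define f where "f i j = (if i < n \<and> j < n then h i * M $$ (i,j) * h j else 0)" for i j
  have "dotn n (mv n M h) h = (\<Sum>i<n. \<Sum>j<n. f i j)"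
  proof -
    have "dotn n (mv n M h) h = (\<Sum>i<n. (\<Sum>j<n. M $$ (i,j) * h j) * h i)"
      unfolding dotn_def mv_def by (intro sum.cong refl) (simp only: lessThan_iff if_True mult.commute)
    also have "\<dots> = (\<Sum>i<n. \<Sum>j<n. M $$ (i,j) * h j * h i)" by (simp only: sum_distrib_right)
    also have "\<dots> = (\<Sum>i<n. \<Sum>j<n. f i j)"
      unfolding f_def by (intro sum.cong refl) (simp only: lessThan_iff if_True conj_absorb simp_thms mult_ac)
    finally show ?thesis .
  qed
  also have "\<dots> = 0"
  proof (rule pair_sum)
    show "f i j = f j i" for i j
    proof (cases "i < n \<and> j < n")
      case True then have "M $$ (i,j) = M $$ (j,i)" using sym by blast
      then show ?thesis unfolding f_def using True by (simp only: if_True conj_commute[of "j < n"] mult_ac)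
    next
      case False then show ?thesis unfolding f_def by auto
    qed
    show "f i i = 0" for i unfolding f_def using dg
      by (cases "i < n") (simp_all only: conj_absorb if_True if_False mult_zero_right mult_zero_left)
  qed
  finally show ?thesis .
qed

lemma mv_restrict: "mv n M g = mv n M (\<lambda>j. if j < n then g j else 0)"
proof -
  have "(\<Sum>j<n. M $$ (i,j) * g j) = (\<Sum>j<n. M $$ (i,j) * (if j < n then g j else 0))" for i
    by (rule sum.cong) (simp_all only: lessThan_iff if_True)
  then show ?thesis unfolding mv_def by (simp only:)
qed

lemma finite_CS: "finite (CS n M)"
proof -
  have "CS n M \<subseteq> mv n M ` {g. \<forall>j. g j \<noteq> 0 \<longrightarrow> j < n}"
  proof
    fix q assume "q \<in> CS n M"
    then obtain g where q: "q = mv n M g" unfolding CS_def by auto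
    have mem: "(\<lambda>j. if j < n then g j else 0) \<in> {g. \<forall>j. g j \<noteq> 0 \<longrightarrow> j < n}"
      by (simp only: mem_Collect_eq) metis
    have eq: "q = mv n M (\<lambda>j. if j < n then g j else 0)" using q mv_restrict by (rule trans)
    show "q \<in> mv n M ` {g. \<forall>j. g j \<noteq> 0 \<longrightarrow> j < n}" by (rule image_eqI[where f="mv n M", OF eq mem])
  qed
  moreover have "finite {g::nat \<Rightarrow> bit. \<forall>j. g j \<noteq> 0 \<longrightarrow> j < n}"
  proof -
    have fb: "finite (UNIV::bit set)" by (rule finite_UNIV_bit)
    have "finite {g::nat \<Rightarrow> bit. \<forall>j. (j \<in> {..<n} \<longrightarrow> g j \<in> UNIV) \<and> (j \<notin> {..<n} \<longrightarrow> g j = 0)}"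
      by (rule finite_set_of_finite_funs[OF finite_lessThan fb])
    moreover have "{g::nat \<Rightarrow> bit. \<forall>j. g j \<noteq> 0 \<longrightarrow> j < n} \<subseteq> {g::nat \<Rightarrow> bit. \<forall>j. (j \<in> {..<n} \<longrightarrow> g j \<in> UNIV) \<and> (j \<notin> {..<n} \<longrightarrow> g j = 0)}"
      by (auto simp only: mem_Collect_eq lessThan_iff UNIV_I subset_iff)
    ultimately show ?thesis by (rule finite_subset[rotated])
  qed
  ultimately show ?thesis by (rule finite_subset[OF _ finite_imageI])
qed

lemma CS_even:
  assumes sym: "\<And>i j. i < n \<Longrightarrow> j < n \<Longrightarrow> M $$ (i,j) = M $$ (j,i)"
    and dg: "\<And>i. i < n \<Longrightarrow> M $$ (i,i) = 0"
  shows "\<exists>k. card (CS n M) = 4 ^ k"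
proof -
  define pre where "pre q = (SOME g. mv n M g = q)" for q
  define \<beta> where "\<beta> p q = dotn n p (pre q)" for p q
  have pre: "mv n M (pre (mv n M g)) = mv n M g" for g
    unfolding pre_def by (rule someI[of "\<lambda>ga. mv n M ga = mv n M g" g]) (rule refl)
  have key: "\<beta> (mv n M h) (mv n M g) = dotn n (mv n M h) g" for h g
  proof -
    have "\<beta> (mv n M h) (mv n M g) = dotn n h (mv n M (pre (mv n M g)))"
      unfolding \<beta>_def by (rule dotn_mv[OF sym])
    also have "\<dots> = dotn n h (mv n M g)" by (simp only: pre)
    also have "\<dots> = dotn n (mv n M h) g" by (rule dotn_mv[OF sym, symmetric])
    finally show ?thesis .
  qed
  show ?thesis
  proof (rule alt_form_card[where \<beta> = \<beta>])
    show "finite (CS n M)" by (rule finite_CS)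
    show "v + v = 0" for v :: "nat \<Rightarrow> bit" by (rule fun_add_self)
    show "0 \<in> CS n M" unfolding CS_def using mv_zero by (metis rangeI)
    show "p + q \<in> CS n M" if "p \<in> CS n M" "q \<in> CS n M" for p q
      using that unfolding CS_def by (auto simp: mv_add[symmetric])
    show "\<beta> (p + p') q = \<beta> p q + \<beta> p' q" for p p' q
      unfolding \<beta>_def by (rule dotn_add)
    show "\<beta> p q = \<beta> q p" if "p \<in> CS n M" "q \<in> CS n M" for p q
      using that unfolding CS_def by (auto simp only: key) (metis dotn_mv[OF sym] dotn_comm)
    show "\<beta> p p = 0" if "p \<in> CS n M" for p
      using that unfolding CS_def by (auto simp: key dotn_mv_self[OF sym dg])
    show "p = 0" if p: "p \<in> CS n M" and pq: "\<forall>q\<in>CS n M. \<beta> p q = 0" for p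
    proof -
      obtain h where h: "p = mv n M h" using p unfolding CS_def by auto
      have "p i = 0" for i
      proof (cases "i < n")
        case True
        have "\<beta> p (mv n M (\<lambda>j. if j = i then 1 else 0)) = 0" using pq unfolding CS_def by auto
        then have "dotn n p (\<lambda>j. if j = i then 1 else 0) = 0" using h key by simp
        then show ?thesis using True by (simp add: dotn_def if_distrib cong: if_cong)
      next
        case False then show ?thesis using h by (simp add: mv_def)
      qed
      then show ?thesis by (simp add: fun_eq_iff)
    qed
  qed
qed

definition vf :: "nat \<Rightarrow> bit vec \<Rightarrow> nat \<Rightarrow> bit" where
  "vf n v = (\<lambda>i. if i < n then v $ i else 0)"

lemma vf_mult:
  assumes M: "M \<in> carrier_mat n n" and u: "u \<in> carrier_vec n"
  shows "vf n (M *\<^sub>v u) = mv n M (\<lambda>j. u $ j)"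
proof (rule ext)
  fix i
  show "vf n (M *\<^sub>v u) i = mv n M (\<lambda>j. u $ j) i"
  proof (cases "i < n")
    case True
    have "(M *\<^sub>v u) $ i = row M i \<bullet> u" using M True by (simp only: index_mult_mat_vec carrier_matD)
    also have "\<dots> = (\<Sum>j\<in>{0..<n}. row M i $ j * u $ j)" using u by (simp only: scalar_prod_def carrier_vecD)
    also have "\<dots> = (\<Sum>j<n. M $$ (i,j) * u $ j)"
      using M True by (intro sum.cong) (auto simp only: atLeast0LessThan index_row carrier_matD lessThan_iff)
    finally show ?thesis using True unfolding vf_def mv_def by (simp only: if_True)
  next
    case False then show ?thesis unfolding vf_def mv_def by (simp only: if_False)
  qed
qed

lemma vf_inj: "inj_on (vf n) (carrier_vec n)"
proof (rule inj_onI)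
  fix v w assume v: "v \<in> carrier_vec n" and w: "w \<in> carrier_vec n" and eq: "vf n v = vf n w"
  show "v = w"
  proof (rule eq_vecI)
    show "dim_vec v = dim_vec w" using v w by simp
    fix i assume "i < dim_vec w"
    then have "i < n" using w by simp
    then show "v $ i = w $ i" using fun_cong[OF eq, of i] unfolding vf_def by (simp only: if_True)
  qed
qed

lemma vf_col_space:
  assumes M: "M \<in> carrier_mat n n"
  shows "vf n ` vec_space.col_space n M = CS n M" and "vec_space.col_space n M \<subseteq> carrier_vec n"
proof -
  have cs: "vec_space.col_space n M = {y \<in> carrier_vec n. \<exists>x\<in>carrier_vec n. M *\<^sub>v x = y}"
    using vec_space.col_space_eq[OF M] M by simp
  show "vec_space.col_space n M \<subseteq> carrier_vec n" unfolding cs by auto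
  show "vf n ` vec_space.col_space n M = CS n M"
  proof (intro equalityI subsetI)
    fix q assume "q \<in> vf n ` vec_space.col_space n M"
    then obtain u where u: "u \<in> carrier_vec n" and q: "q = vf n (M *\<^sub>v u)" unfolding cs by auto
    then show "q \<in> CS n M" unfolding CS_def using vf_mult[OF M u] by simp
  next
    fix q assume "q \<in> CS n M"
    then obtain g where q: "q = mv n M g" unfolding CS_def by auto
    have u: "vec n g \<in> carrier_vec n" by simp
    have r: "(\<lambda>j. if j < n then vec n g $ j else 0) = (\<lambda>j. if j < n then g j else 0)"
      by (rule ext) (simp only: index_vec cong: if_cong)
    have "mv n M g = mv n M (\<lambda>j. if j < n then g j else 0)" by (rule mv_restrict)
    also have "\<dots> = mv n M (\<lambda>j. if j < n then vec n g $ j else 0)" by (simp only: r)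
    also have "\<dots> = mv n M (\<lambda>j. vec n g $ j)" by (rule mv_restrict[symmetric])
    finally have "mv n M g = mv n M (\<lambda>j. vec n g $ j)" .
    then have "q = vf n (M *\<^sub>v vec n g)" using vf_mult[OF M u] q by simp
    moreover have "M *\<^sub>v vec n g \<in> vec_space.col_space n M" unfolding cs using M by auto
    ultimately show "q \<in> vf n ` vec_space.col_space n M" by blast
  qed
qed

lemma card_CS_rank:
  assumes M: "M \<in> carrier_mat n n"
  shows "card (CS n M) = 2 ^ vec_space.rank n M"
proof -
  have "card (CS n M) = card (vec_space.col_space n M)"
    using vf_col_space[OF M] vf_inj by (metis card_image inj_on_subset)
  also have "\<dots> = card (UNIV::bit set) ^ vec_space.rank n M"
    using vec_space.card_col_space[OF M] vec_space.col_space_def by metis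
  finally show ?thesis by (simp only: card_UNIV_bit)
qed

lemma col_space_mono:
  assumes M: "M \<in> carrier_mat n n" and M': "M' \<in> carrier_mat n n" and sub: "CS n M \<subseteq> CS n M'"
  shows "vec_space.col_space n M \<subseteq> vec_space.col_space n M'"
proof
  fix v assume v: "v \<in> vec_space.col_space n M"
  then have "vf n v \<in> CS n M'" using vf_col_space(1)[OF M] sub by blast
  then obtain w where w: "w \<in> vec_space.col_space n M'" "vf n w = vf n v"
    using vf_col_space(1)[OF M'] by (metis imageE)
  have "v = w" using vf_inj w v vf_col_space(2)[OF M] vf_col_space(2)[OF M']
    by (metis inj_onD subsetD)
  then show "v \<in> vec_space.col_space n M'" using w by simp
qed

lemma adj_carrier: "adj_mat n F \<in> carrier_mat n n" unfolding adj_mat_def by simp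

lemma adj_idx: "i < n \<Longrightarrow> j < n \<Longrightarrow> adj_mat n F $$ (i,j) = (if F i j then 1 else 0)"
  unfolding adj_mat_def by (simp only: index_mat case_prod_conv)

lemma mv_pert:
  assumes ent: "\<And>i j. i < n \<Longrightarrow> j < n \<Longrightarrow> M' $$ (i,j) = M $$ (i,j) + x i * y j + y i * x j"
    and x0: "\<And>i. \<not> i < n \<Longrightarrow> x i = 0" and y0: "\<And>i. \<not> i < n \<Longrightarrow> y i = 0"
  shows "mv n M' g = mv n M g + (\<lambda>i. dotn n y g * x i + dotn n x g * y i)"
proof (rule ext)
  fix i
  show "mv n M' g i = (mv n M g + (\<lambda>i. dotn n y g * x i + dotn n x g * y i)) i"
  proof (cases "i < n")
    case True
    have e: "M' $$ (i,j) * g j = M $$ (i,j) * g j + x i * (y j * g j) + y i * (x j * g j)" if "j \<in> {..<n}" for j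
      using ent[OF True, of j] that by (simp only: lessThan_iff algebra_simps)
    have "mv n M' g i = (\<Sum>j<n. M' $$ (i,j) * g j)" unfolding mv_def using True by (simp only: if_True)
    also have "\<dots> = (\<Sum>j<n. M $$ (i,j) * g j + x i * (y j * g j) + y i * (x j * g j))"
      using e by (rule sum.cong[OF refl])
    also have "\<dots> = (\<Sum>j<n. M $$ (i,j) * g j) + x i * (\<Sum>j<n. y j * g j) + y i * (\<Sum>j<n. x j * g j)"
      by (simp only: sum.distrib sum_distrib_left)
    also have "\<dots> = (mv n M g + (\<lambda>i. dotn n y g * x i + dotn n x g * y i)) i"
      unfolding mv_def dotn_def plus_fun_def using True by (simp only: if_True mult.commute add.assoc)
    finally show ?thesis .
  next
    case False
    then show ?thesis unfolding mv_def plus_fun_def using x0[OF False] y0[OF False]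
      by (simp only: if_False mult_zero_right add_0_left)
  qed
qed

definition Tset :: "nat \<Rightarrow> bit mat \<Rightarrow> (nat \<Rightarrow> bit) \<Rightarrow> (nat \<Rightarrow> bit) \<Rightarrow> (nat \<Rightarrow> bit) set" where
  "Tset n M x y = (\<lambda>(c, a, b). c + (\<lambda>i. a * x i + b * y i)) ` (CS n M \<times> UNIV \<times> UNIV)"

lemma Tset_card: "card (Tset n M x y) \<le> 4 * card (CS n M)" and Tset_fin: "finite (Tset n M x y)"
proof -
  have fin: "finite (CS n M \<times> (UNIV::bit set) \<times> (UNIV::bit set))"
    using finite_CS finite_UNIV_bit by blast
  have "card (Tset n M x y) \<le> card (CS n M \<times> (UNIV::bit set) \<times> (UNIV::bit set))"
    unfolding Tset_def by (rule card_image_le[OF fin])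
  also have "\<dots> = 4 * card (CS n M)"
    by (simp only: card_cartesian_product card_UNIV_bit)
  finally show "card (Tset n M x y) \<le> 4 * card (CS n M)" .
  show "finite (Tset n M x y)" unfolding Tset_def using fin by (rule finite_imageI)
qed

lemma CS_sub_Tset: "CS n M \<subseteq> Tset n M x y"
proof
  fix c assume c: "c \<in> CS n M"
  have "c = (\<lambda>(c, a, b). c + (\<lambda>i. a * x i + b * y i)) (c, 0, 0)"
    by (simp only: case_prod_conv mult_zero_left add_0_left) (simp only: zero_fun_def[symmetric] add_0_right)
  then show "c \<in> Tset n M x y" unfolding Tset_def using c by blast
qed

lemma CS_pert_sub:
  assumes "\<And>g. mv n M' g = mv n M g + (\<lambda>i. dotn n y g * x i + dotn n x g * y i)"
  shows "CS n M' \<subseteq> Tset n M x y"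
proof
  fix q assume "q \<in> CS n M'"
  then obtain g where q: "q = mv n M' g" unfolding CS_def by auto
  have "q = (\<lambda>(c, a, b). c + (\<lambda>i. a * x i + b * y i)) (mv n M g, dotn n y g, dotn n x g)"
    using q assms by (simp only: case_prod_conv)
  moreover have "(mv n M g, dotn n y g, dotn n x g) \<in> CS n M \<times> UNIV \<times> UNIV" unfolding CS_def by simp
  ultimately show "q \<in> Tset n M x y" unfolding Tset_def by (rule image_eqI)
qed

lemma rank_even:
  fixes M :: "bit mat"
  assumes M: "M \<in> carrier_mat n n"
    and sym: "\<And>i j. i < n \<Longrightarrow> j < n \<Longrightarrow> M $$ (i,j) = M $$ (j,i)"
    and dg: "\<And>i. i < n \<Longrightarrow> M $$ (i,i) = 0"
  shows "even (vec_space.rank n M)"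
proof -
  obtain k where k: "card (CS n M) = 4 ^ k" using CS_even[OF sym dg] by blast
  have "(2::nat) ^ vec_space.rank n M = 2 ^ (2 * k)"
    using card_CS_rank[OF M] k by (simp add: power_mult)
  then have "vec_space.rank n M = 2 * k" by simp
  then show ?thesis by simp
qed

lemma gm_sym: assumes "\<And>u v. E u v \<longleftrightarrow> E v u" shows "gm_switch W E u v = gm_switch W E v u"
  unfolding gm_switch_def using assms by auto

lemma gm_irrefl: "gm_switch W E v v = E v v"
  unfolding gm_switch_def by auto

lemma adj_sym: assumes "\<And>u v. F u v \<longleftrightarrow> F v u" "i < n" "j < n"
  shows "adj_mat n F $$ (i,j) = adj_mat n F $$ (j,i)"
  using assms by (simp only: adj_idx)

lemma adj_diag: assumes "\<And>v. \<not> F v v" "i < n"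
  shows "adj_mat n F $$ (i,i) = 0"
  using assms by (simp only: adj_idx if_False)

theorem mainTheorem3:
  fixes n :: nat and E :: "nat \<Rightarrow> nat \<Rightarrow> bool" and W :: "nat set"
  assumes G: "simple_graph n E"
    and W: "W \<subseteq> {0..<n}"
    and reg: "\<exists>k. \<forall>w \<in> W. nbrs_in E W w = k"
    and out: "\<forall>v \<in> {0..<n} - W. nbrs_in E W v = card W \<or> 2 * nbrs_in E W v = card W
                                   \<or> nbrs_in E W v = 0"
  shows "int (rank2 n (adj_mat n (gm_switch W E)))
           \<in> {int (rank2 n (adj_mat n E)) - 2, int (rank2 n (adj_mat n E)),
              int (rank2 n (adj_mat n E)) + 2} \<and>
         (rank2 n (adj_mat n (gm_switch W E)) = rank2 n (adj_mat n E) + 2 \<longrightarrow>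
           col2 n (adj_mat n E) \<subseteq> col2 n (adj_mat n (gm_switch W E)) \<and>
           (vec n (\<lambda>_. 1) \<in> col2 n (adj_mat n E) \<longrightarrow>
              vec n (\<lambda>_. 1) \<in> col2 n (adj_mat n (gm_switch W E))))"
proof -
  define A where "A = adj_mat n E"
  define B where "B = adj_mat n (gm_switch W E)"
  define xs :: "nat \<Rightarrow> bit" where "xs i = (if i < n \<and> i \<in> W then 1 else 0)" for i
  define ys :: "nat \<Rightarrow> bit" where "ys i = (if i < n \<and> i \<notin> W \<and> 2 * nbrs_in E W i = card W then 1 else 0)" for i
  have Esym: "\<And>u v. E u v \<longleftrightarrow> E v u" and Eirr: "\<And>v. \<not> E v v"
    using G unfolding simple_graph_def by auto
  have Ac: "A \<in> carrier_mat n n" and Bc: "B \<in> carrier_mat n n" unfolding A_def B_def by (rule adj_carrier)+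
  have x0: "\<And>i. \<not> i < n \<Longrightarrow> xs i = 0" and y0: "\<And>i. \<not> i < n \<Longrightarrow> ys i = 0"
    unfolding xs_def ys_def by simp_all
  have entB: "B $$ (i,j) = A $$ (i,j) + xs i * ys j + ys i * xs j" if "i < n" "j < n" for i j
    unfolding A_def B_def using that
    by (simp only: adj_idx) (auto simp: gm_switch_def xs_def ys_def)
  have entA: "A $$ (i,j) = B $$ (i,j) + xs i * ys j + ys i * xs j" if "i < n" "j < n" for i j
  proof -
    let ?t = "xs i * ys j + ys i * xs j"
    have "B $$ (i,j) + xs i * ys j + ys i * xs j = A $$ (i,j) + (?t + ?t)"
      using entB[OF that] by (simp only: add.assoc)
    also have "\<dots> = A $$ (i,j)" by (simp only: bit_add_self add_0_right)
    finally show ?thesis by (rule sym)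
  qed
  have mvB: "mv n B g = mv n A g + (\<lambda>i. dotn n ys g * xs i + dotn n xs g * ys i)" for g
    by (rule mv_pert[OF entB x0 y0])
  have mvA: "mv n A g = mv n B g + (\<lambda>i. dotn n ys g * xs i + dotn n xs g * ys i)" for g
    by (rule mv_pert[OF entA x0 y0])
  have subB: "CS n B \<subseteq> Tset n A xs ys" by (rule CS_pert_sub[OF mvB])
  have subA: "CS n A \<subseteq> Tset n B xs ys" by (rule CS_pert_sub[OF mvA])
  define rA where "rA = rank2 n A"
  define rB where "rB = rank2 n B"
  have cA: "card (CS n A) = 2 ^ rA" unfolding rA_def by (rule card_CS_rank[OF Ac])
  have cB: "card (CS n B) = 2 ^ rB" unfolding rB_def by (rule card_CS_rank[OF Bc])
  have symA: "adj_mat n E $$ (i,j) = adj_mat n E $$ (j,i)" if "i < n" "j < n" for i j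
    using that by (rule adj_sym[OF Esym])
  have eA: "even rA" unfolding rA_def A_def
    by (rule rank_even[OF adj_carrier symA]) (auto intro: adj_diag simp: Eirr)
  have gsym: "\<And>u v. gm_switch W E u v \<longleftrightarrow> gm_switch W E v u" by (rule gm_sym[OF Esym])
  have symB: "adj_mat n (gm_switch W E) $$ (i,j) = adj_mat n (gm_switch W E) $$ (j,i)" if "i < n" "j < n" for i j
    using that by (rule adj_sym[OF gsym])
  have eB: "even rB" unfolding rB_def B_def
    by (rule rank_even[OF adj_carrier symB]) (auto intro: adj_diag simp: gm_irrefl Eirr)
  have "(2::nat) ^ rB \<le> 2 ^ (rA + 2)"
  proof -
    have "(2::nat) ^ rB = card (CS n B)" using cB by simp
    also have "\<dots> \<le> card (Tset n A xs ys)" by (rule card_mono[OF Tset_fin subB])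
    also have "\<dots> \<le> 4 * card (CS n A)" by (rule Tset_card)
    finally show ?thesis using cA by (simp add: power_add)
  qed
  then have le1: "rB \<le> rA + 2" by (rule power_le_imp_le_exp[rotated]) simp
  have "(2::nat) ^ rA \<le> 2 ^ (rB + 2)"
  proof -
    have "(2::nat) ^ rA = card (CS n A)" using cA by simp
    also have "\<dots> \<le> card (Tset n B xs ys)" by (rule card_mono[OF Tset_fin subA])
    also have "\<dots> \<le> 4 * card (CS n B)" by (rule Tset_card)
    finally show ?thesis using cB by (simp add: power_add)
  qed
  then have le2: "rA \<le> rB + 2" by (rule power_le_imp_le_exp[rotated]) simp
  have part1: "int rB \<in> {int rA - 2, int rA, int rA + 2}"
    using le1 le2 eA eB by (auto elim!: evenE)
  have part2: "col2 n A \<subseteq> col2 n B" if eq: "rB = rA + 2"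
  proof -
    have "card (Tset n A xs ys) \<le> card (CS n B)"
      using Tset_card[of n A xs ys] cA cB eq by (simp add: power_add)
    then have "CS n B = Tset n A xs ys" by (rule card_seteq[OF Tset_fin subB, rotated])
    then have "CS n A \<subseteq> CS n B" using CS_sub_Tset by blast
    then show ?thesis by (rule col_space_mono[OF Ac Bc])
  qed
  show ?thesis using part1 part2 unfolding rA_def rB_def A_def B_def by blast
qed

end
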